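(* Let $f \colon \mathbb{R}^n \to \mathbb{R}$ and $g \colon \mathbb{R}^n \to \mathbb{R}^m$ be continuously differentiable, let $X \subseteq \mathbb{R}^m$ be nonempty and closed, let $\rho>0$, and let $p^\rho(y) = \sum_{i=1}^n p_i^\rho(y_i)$ where each $p_i^\rho$ satisfies (P.1)–(P.3) below. Let $(x^*,y^* )$ be a stationary point of (SPOref) such that SP-GMFCQ holds at $x^*$. Then there exist $\alpha^*>0$ and a neighborhood $U$ of $(x^*,y^* )$ such that, for all $\alpha\ge\alpha^*$, every stationary point of Pen$(\alpha)$ lying in $U$ is a stationary point of (SPOref).
   Context: Conditions on each $p_i^\rho\colon\mathbb{R}\to\mathbb{R}$: (P.1) convex with a unique minimizer $s_i^\rho>0$; (P.2) $p_i^\rho(0)-p_i^\rho(s_i^\rho)=\rho$; (P.3) continuously differentiable. Notation: $I_0(z)=\{i : z_i=0\}$, $|x| = (|x_1|,\dots,|x_n|)^T$, $\circ$ the componentwise product, $e_i$ the $i$-th unit vector, $g'(x)$ the Jacobian of $g$, $N^{\lim}_X$ the limiting (Mordukhovich) normal cone to $X$. (SPOref) is $\min_{x,y} f(x)+p^\rho(y)$ s.t. $g(x)\in X$, $x\circ y=0$, $y\ge0$. A feasible point $(x,y)$ of (SPOref) is stationary if there exist $\lambda\in N^{\lim}_X(g(x))$, reals $\gamma_i^x$ ($i\in I_0(x)$), $\gamma_i^y$ and $\nu_i\ge 0$ ($i\in I_0(y)$) with $0 = \nabla f(x) + g'(x)^T\lambda + \sum_{i\in I_0(x)} \gamma_i^x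 y_i e_i$ and $0 = \nabla p^\rho(y) + \sum_{i\in I_0(y)}(\gamma_i^y x_i - \nu_i) e_i$. Pen$(\alpha)$ is $\min_{x,y} f(x)+p^\rho(y)+\alpha|x|^Ty$ s.t. $g(x)\in X$, $y\ge 0$; a point $(x,y)$ is stationary for Pen$(\alpha)$ if $g(x)\in X$, $y\ge0$, and there exist $\lambda\in N^{\lim}_X(g(x))$ and $\gamma_i\ge 0$ ($i\in I_0(y)$) such that $0\in \nabla f(x) + \alpha\, y\circ\partial(|x|) + g'(x)^T\lambda$ and $0 = \nabla p^\rho(y) + \alpha|x| - \sum_{i\in I_0(y)}\gamma_i e_i$, where $y\circ\partial(|x|) = \{y\circ s : s_i = \operatorname{sign}(x_i) \text{ if } x_i\ne0,\ s_i\in[-1,1] \text{ if } x_i=0\}$. SP-GMFCQ holds at $x^*$ (with $g(x^* )\in X$) if there is no nonzero pair $(\lambda^a,\lambda^b)\in\mathbb{R}^{|I_0(x^* )|}\times N^{\lim}_X(g(x^* ))$ with $\sum_{i\in I_0(x^* )}\lambda^a_i e_i + g'(x^* )^T\lambda^b = 0$. *)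

theory Defs
  imports "HOL-Analysis.Analysis"
begin

definition C1_map :: "('a::euclidean_space \<Rightarrow> 'b::euclidean_space) \<Rightarrow> bool" where
  "C1_map F \<longleftrightarrow> (\<exists>F'. (\<forall>x. (F has_derivative blinfun_apply (F' x)) (at x)) \<and> continuous_on UNIV F')"

definition regular_normal_cone :: "'a::euclidean_space set \<Rightarrow> 'a \<Rightarrow> 'a set" where
  "regular_normal_cone X z = {v. z \<in> X \<and>
     (\<forall>\<epsilon>>0. \<exists>\<delta>>0. \<forall>z'\<in>X. norm (z' - z) < \<delta> \<longrightarrow> inner v (z' - z) \<le> \<epsilon> * norm (z' - z))}"

definition limiting_normal_cone :: "'a::euclidean_space set \<Rightarrow> 'a \<Rightarrow> 'a set" where
  "limiting_normal_cone X z = {v. z \<in> X \<and> (\<exists>zk vk. (\<forall>k. zk k \<in> X \<and> vk k \<in> regular_normal_cone X (zk k))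
       \<and> zk \<longlonglongrightarrow> z \<and> vk \<longlonglongrightarrow> v)}"

definition grad :: "(real^'n \<Rightarrow> real) \<Rightarrow> real^'n \<Rightarrow> real^'n" where
  "grad F x = (\<chi> j. frechet_derivative F (at x) (axis j 1))"

definition jacT :: "(real^'n \<Rightarrow> real^'m) \<Rightarrow> real^'n \<Rightarrow> real^'m \<Rightarrow> real^'n" where
  "jacT G x l = (\<chi> j. inner l (frechet_derivative G (at x) (axis j 1)))"

definition psum :: "('n::finite \<Rightarrow> real \<Rightarrow> real) \<Rightarrow> real^'n \<Rightarrow> real" where
  "psum p y = (\<Sum>i\<in>UNIV. p i (y $ i))"

definition grad_psum :: "('n \<Rightarrow> real \<Rightarrow> real) \<Rightarrow> real^'n \<Rightarrow> real^'n" where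
  "grad_psum p y = (\<chi> i. deriv (p i) (y $ i))"

definition penalty_cond :: "real \<Rightarrow> (real \<Rightarrow> real) \<Rightarrow> bool" where
  "penalty_cond \<rho> q \<longleftrightarrow>
     convex_on UNIV q \<and>
     (\<exists>s>0. (\<forall>t. t \<noteq> s \<longrightarrow> q s < q t) \<and> q 0 - q s = \<rho>) \<and>
     (\<exists>q'. (\<forall>t. (q has_real_derivative q' t) (at t)) \<and> continuous_on UNIV q')"

definition SPO_stationary ::
  "(real^'n \<Rightarrow> real) \<Rightarrow> (real^'n \<Rightarrow> real^'m) \<Rightarrow> (real^'m) set \<Rightarrow> ('n \<Rightarrow> real \<Rightarrow> real)
     \<Rightarrow> real^'n \<Rightarrow> real^'n \<Rightarrow> bool" where
  "SPO_stationary f g X p x y \<longleftrightarrow>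
     g x \<in> X \<and> (\<forall>i. x $ i * y $ i = 0) \<and> (\<forall>i. y $ i \<ge> 0) \<and>
     (\<exists>lam gx gy nu. lam \<in> limiting_normal_cone X (g x) \<and>
        (\<forall>i. y $ i = 0 \<longrightarrow> nu i \<ge> 0) \<and>
        0 = grad f x + jacT g x lam + (\<chi> i. if x $ i = 0 then gx i * y $ i else 0) \<and>
        0 = grad_psum p y + (\<chi> i. if y $ i = 0 then gy i * x $ i - nu i else 0))"

definition Pen_stationary ::
  "(real^'n \<Rightarrow> real) \<Rightarrow> (real^'n \<Rightarrow> real^'m) \<Rightarrow> (real^'m) set \<Rightarrow> ('n \<Rightarrow> real \<Rightarrow> real)
     \<Rightarrow> real \<Rightarrow> real^'n \<Rightarrow> real^'n \<Rightarrow> bool" where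
  "Pen_stationary f g X p \<alpha> x y \<longleftrightarrow>
     g x \<in> X \<and> (\<forall>i. y $ i \<ge> 0) \<and>
     (\<exists>lam gam. lam \<in> limiting_normal_cone X (g x) \<and>
        (\<forall>i. y $ i = 0 \<longrightarrow> gam i \<ge> 0) \<and>
        (\<exists>s::real^'n. (\<forall>i. x $ i \<noteq> 0 \<longrightarrow> s $ i = sgn (x $ i)) \<and>
                      (\<forall>i. x $ i = 0 \<longrightarrow> \<bar>s $ i\<bar> \<le> 1) \<and>
           0 = grad f x + \<alpha> *\<^sub>R (\<chi> i. y $ i * s $ i) + jacT g x lam) \<and>
        0 = grad_psum p y + \<alpha> *\<^sub>R (\<chi> i. \<bar>x $ i\<bar>) - (\<chi> i. if y $ i = 0 then gam i else 0))"

(* SP-GMFCQ at x; lambda^a in R^{|I_0(x)|} encoded as a vector supported on I_0(x) *)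
definition SP_GMFCQ ::
  "(real^'n \<Rightarrow> real^'m) \<Rightarrow> (real^'m) set \<Rightarrow> real^'n \<Rightarrow> bool" where
  "SP_GMFCQ g X x \<longleftrightarrow> g x \<in> X \<and>
     (\<forall>la lb. (\<forall>i. x $ i \<noteq> 0 \<longrightarrow> la $ i = 0) \<and> lb \<in> limiting_normal_cone X (g x) \<and>
        la + jacT g x lb = 0 \<longrightarrow> la = 0 \<and> lb = 0)"

end

theory Submission
  imports Defs
begin

lemma reg_cone_scale:
  assumes "v \<in> regular_normal_cone X z" "c > 0"
  shows "c *\<^sub>R v \<in> regular_normal_cone X z"
proof -
  have z: "z \<in> X" using assms(1) unfolding regular_normal_cone_def by simp
  have R: "\<forall>\<epsilon>>0. \<exists>\<delta>>0. \<forall>z'\<in>X. norm (z' - z) < \<delta> \<longrightarrow> inner v (z' - z) \<le> \<epsilon> * norm (z' - z)"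
    using assms(1) unfolding regular_normal_cone_def by simp
  have "\<forall>\<epsilon>>0. \<exists>\<delta>>0. \<forall>z'\<in>X. norm (z' - z) < \<delta> \<longrightarrow> inner (c *\<^sub>R v) (z' - z) \<le> \<epsilon> * norm (z' - z)"
  proof (intro allI impI)
    fix e :: real assume e: "e > 0"
    then have "e / c > 0" using assms(2) by simp
    then obtain d where d: "d > 0" "\<forall>z'\<in>X. norm (z' - z) < d \<longrightarrow> inner v (z' - z) \<le> (e/c) * norm (z' - z)"
      using R by blast
    have "\<forall>z'\<in>X. norm (z' - z) < d \<longrightarrow> inner (c *\<^sub>R v) (z' - z) \<le> e * norm (z' - z)"
    proof (intro ballI impI)
      fix z' assume "z' \<in> X" "norm (z' - z) < d"
      then have h: "inner v (z' - z) \<le> (e/c) * norm (z' - z)" using d(2) by blast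
      have "c * inner v (z' - z) \<le> c * ((e/c) * norm (z' - z))"
        by (rule mult_left_mono[OF h]) (use assms(2) in simp)
      also have "c * ((e/c) * norm (z' - z)) = e * norm (z' - z)" using assms(2) by simp
      finally show "inner (c *\<^sub>R v) (z' - z) \<le> e * norm (z' - z)" by simp
    qed
    then show "\<exists>\<delta>>0. \<forall>z'\<in>X. norm (z' - z) < \<delta> \<longrightarrow> inner (c *\<^sub>R v) (z' - z) \<le> e * norm (z' - z)"
      using d(1) by blast
  qed
  then show ?thesis unfolding regular_normal_cone_def using z by simp
qed

lemma lim_cone_scale:
  assumes "v \<in> limiting_normal_cone X z" "c > 0"
  shows "c *\<^sub>R v \<in> limiting_normal_cone X z"
proof -
  have z: "z \<in> X" using assms(1) unfolding limiting_normal_cone_def by simp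
  have "z \<in> X \<and> (\<exists>zk vk. (\<forall>k. zk k \<in> X \<and> vk k \<in> regular_normal_cone X (zk k)) \<and> zk \<longlonglongrightarrow> z \<and> vk \<longlonglongrightarrow> v)"
    using assms(1) unfolding limiting_normal_cone_def by simp
  then obtain zk vk where h: "\<forall>k. zk k \<in> X \<and> vk k \<in> regular_normal_cone X (zk k)" "zk \<longlonglongrightarrow> z" "vk \<longlonglongrightarrow> v"
    by (elim exE conjE) (rule that, assumption+)
  have l: "(\<lambda>k. c *\<^sub>R vk k) \<longlonglongrightarrow> c *\<^sub>R v" using h(3) by (intro tendsto_intros)
  have m: "\<forall>k. zk k \<in> X \<and> c *\<^sub>R vk k \<in> regular_normal_cone X (zk k)"
    using h(1) reg_cone_scale assms(2) by blast
  have "z \<in> X \<and> (\<exists>zk vk. (\<forall>k. zk k \<in> X \<and> vk k \<in> regular_normal_cone X (zk k)) \<and> zk \<longlonglongrightarrow> z \<and> vk \<longlonglongrightarrow> c *\<^sub>R v)"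
    by (intro conjI exI[of _ zk] exI[of _ "\<lambda>k. c *\<^sub>R vk k"] z m h(2) l)
  then show ?thesis unfolding limiting_normal_cone_def by simp
qed

lemma lim_cone_osc:
  assumes "\<forall>k. v k \<in> limiting_normal_cone X (z k)" "z \<longlonglongrightarrow> z0" "v \<longlonglongrightarrow> v0" "z0 \<in> X"
  shows "v0 \<in> limiting_normal_cone X z0"
proof -
  have "\<forall>k. \<exists>w u. w \<in> X \<and> u \<in> regular_normal_cone X w \<and> norm (w - z k) < inverse (real (Suc k))
      \<and> norm (u - v k) < inverse (real (Suc k))"
  proof
    fix k
    obtain zk vk where h: "\<forall>j. zk j \<in> X \<and> vk j \<in> regular_normal_cone X (zk j)" "zk \<longlonglongrightarrow> z k" "vk \<longlonglongrightarrow> v k"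
      using assms(1) unfolding limiting_normal_cone_def by blast
    have ep: "inverse (real (Suc k)) > 0" by simp
    have "eventually (\<lambda>j. dist (zk j) (z k) < inverse (real (Suc k))) sequentially"
      using h(2) ep tendstoD by blast
    moreover have "eventually (\<lambda>j. dist (vk j) (v k) < inverse (real (Suc k))) sequentially"
      using h(3) ep tendstoD by blast
    ultimately have "eventually (\<lambda>j. dist (zk j) (z k) < inverse (real (Suc k)) \<and> dist (vk j) (v k) < inverse (real (Suc k))) sequentially"
      by (rule eventually_conj)
    then obtain N where "\<forall>j\<ge>N. dist (zk j) (z k) < inverse (real (Suc k)) \<and> dist (vk j) (v k) < inverse (real (Suc k))"
      unfolding eventually_sequentially by blast
    then have N: "norm (zk N - z k) < inverse (real (Suc k))" "norm (vk N - v k) < inverse (real (Suc k))"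
      by (simp_all add: dist_norm)
    show "\<exists>w u. w \<in> X \<and> u \<in> regular_normal_cone X w \<and> norm (w - z k) < inverse (real (Suc k))
      \<and> norm (u - v k) < inverse (real (Suc k))"
      by (rule exI[of _ "zk N"], rule exI[of _ "vk N"]) (use h(1) N in blast)
  qed
  then obtain w u where wu: "\<And>k. w k \<in> X \<and> u k \<in> regular_normal_cone X (w k) \<and> norm (w k - z k) < inverse (real (Suc k))
      \<and> norm (u k - v k) < inverse (real (Suc k))" by metis
  have "(\<lambda>k. w k - z k) \<longlonglongrightarrow> 0"
  proof (rule Lim_null_comparison[OF _ LIMSEQ_inverse_real_of_nat], rule always_eventually, rule allI)
    fix k show "norm (w k - z k) \<le> inverse (real (Suc k))" using wu[of k] by linarith
  qed
  then have "(\<lambda>k. (w k - z k) + z k) \<longlonglongrightarrow> 0 + z0" using assms(2) by (intro tendsto_intros)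
  then have w: "w \<longlonglongrightarrow> z0" by simp
  have "(\<lambda>k. u k - v k) \<longlonglongrightarrow> 0"
  proof (rule Lim_null_comparison[OF _ LIMSEQ_inverse_real_of_nat], rule always_eventually, rule allI)
    fix k show "norm (u k - v k) \<le> inverse (real (Suc k))" using wu[of k] by linarith
  qed
  then have "(\<lambda>k. (u k - v k) + v k) \<longlonglongrightarrow> 0 + v0" using assms(3) by (intro tendsto_intros)
  then have u: "u \<longlonglongrightarrow> v0" by simp
  show ?thesis unfolding limiting_normal_cone_def using wu w u assms(4) by blast
qed

lemma pen_deriv:
  assumes "penalty_cond \<rho> q" "\<rho> > 0"
  shows "deriv q 0 < 0" "\<And>t. t \<ge> 0 \<Longrightarrow> deriv q t \<ge> deriv q 0"
proof -
  obtain s q' where cv: "convex_on UNIV q" and s: "s > 0" "q 0 - q s = \<rho>"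
    and d: "\<And>t. (q has_real_derivative q' t) (at t)"
    using assms(1) unfolding penalty_cond_def by blast
  have dq: "\<And>t. deriv q t = q' t" using d DERIV_imp_deriv by blast
  have tan: "\<And>x c. q x - q c \<ge> q' c * (x - c)"
    by (rule convex_on_imp_above_tangent[OF cv]) (use d in auto)
  have "q' 0 * s \<le> q s - q 0" using tan[where x=s and c=0] by simp
  then have "q' 0 * s < 0" using s assms(2) by linarith
  then show "deriv q 0 < 0" using s dq by (simp add: mult_less_0_iff)
  fix t :: real assume t: "t \<ge> 0"
  show "deriv q t \<ge> deriv q 0"
  proof (cases "t = 0")
    case False
    then have tp: "t > 0" using t by simp
    have "q 0 - q t \<ge> q' t * (0 - t)" by (rule tan)
    moreover have "q t - q 0 \<ge> q' 0 * (t - 0)" by (rule tan)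
    ultimately have "q' 0 * t \<le> q' t * t" by (simp add: algebra_simps)
    then show ?thesis using tp dq by simp
  qed simp
qed

lemma C1_frechet:
  assumes "C1_map g"
  obtains G' where "\<And>x. frechet_derivative g (at x) = blinfun_apply (G' x)"
    "\<And>x. (g has_derivative blinfun_apply (G' x)) (at x)" "continuous_on UNIV G'"
  using assms unfolding C1_map_def by (metis frechet_derivative_at)

lemma C1_tendsto:
  assumes "C1_map g" "x \<longlonglongrightarrow> x0"
  shows "(\<lambda>k. g (x k)) \<longlonglongrightarrow> g x0"
proof -
  obtain G' where "\<And>x. (g has_derivative blinfun_apply (G' x)) (at x)"
    using C1_frechet[OF assms(1)] by metis
  then have "isCont g x0" using has_derivative_continuous by blast
  then show ?thesis using assms(2) isCont_tendsto_compose by blast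
qed

lemma jacT_tendsto:
  assumes "C1_map g" "x \<longlonglongrightarrow> x0" "v \<longlonglongrightarrow> v0"
  shows "(\<lambda>k. jacT g (x k) (v k)) \<longlonglongrightarrow> jacT g x0 v0"
proof -
  obtain G' where fd: "\<And>x. frechet_derivative g (at x) = blinfun_apply (G' x)" and c: "continuous_on UNIV G'"
    using C1_frechet[OF assms(1)] by metis
  have "(\<lambda>k. G' (x k)) \<longlonglongrightarrow> G' x0"
    using c assms(2) by (metis continuous_on_eq_continuous_at isCont_tendsto_compose open_UNIV UNIV_I)
  then show ?thesis unfolding jacT_def fd
    by (intro vec_tendstoI) (simp, intro tendsto_intros assms(3) blinfun.tendsto, auto)
qed

lemma grad_tendsto:
  assumes "C1_map f" "x \<longlonglongrightarrow> x0"
  shows "(\<lambda>k. grad f (x k)) \<longlonglongrightarrow> grad f x0"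
proof -
  obtain G' where fd: "\<And>x. frechet_derivative f (at x) = blinfun_apply (G' x)" and c: "continuous_on UNIV G'"
    using C1_frechet[OF assms(1)] by metis
  have "(\<lambda>k. G' (x k)) \<longlonglongrightarrow> G' x0"
    using c assms(2) by (metis continuous_on_eq_continuous_at isCont_tendsto_compose open_UNIV UNIV_I)
  then show ?thesis unfolding grad_def fd
    by (intro vec_tendstoI) (simp, intro tendsto_intros blinfun.tendsto, auto)
qed

lemma jacT_scale: "jacT g x (c *\<^sub>R l) = c *\<^sub>R jacT g x l"
  unfolding jacT_def by (simp add: vec_eq_iff)

lemma bound_lemma:
  assumes f: "C1_map f" and g: "C1_map g" and gm: "SP_GMFCQ g X xs"
  shows "\<exists>\<delta>>0. \<exists>M. \<forall>x lam la. norm (x - xs) < \<delta> \<and> lam \<in> limiting_normal_cone X (g x)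
     \<and> (\<forall>i. xs $ i \<noteq> 0 \<longrightarrow> la $ i = 0) \<and> la + jacT g x lam + grad f x = 0 \<longrightarrow> norm la \<le> M"
proof (rule ccontr)
  assume nt: "\<not> ?thesis"
  have "\<forall>k::nat. \<exists>x lam la. norm (x - xs) < inverse (real (Suc k)) \<and> lam \<in> limiting_normal_cone X (g x)
     \<and> (\<forall>i. xs $ i \<noteq> 0 \<longrightarrow> la $ i = 0) \<and> la + jacT g x lam + grad f x = 0 \<and> norm la > real (Suc k)"
  proof
    fix k :: nat
    have d: "inverse (real (Suc k)) > 0" by simp
    show "\<exists>x lam la. norm (x - xs) < inverse (real (Suc k)) \<and> lam \<in> limiting_normal_cone X (g x)
     \<and> (\<forall>i. xs $ i \<noteq> 0 \<longrightarrow> la $ i = 0) \<and> la + jacT g x lam + grad f x = 0 \<and> norm la > real (Suc k)"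
      using nt d by (meson not_le)
  qed
  then obtain xk lk ak where H: "\<And>k. norm (xk k - xs) < inverse (real (Suc k)) \<and> lk k \<in> limiting_normal_cone X (g (xk k))
     \<and> (\<forall>i. xs $ i \<noteq> 0 \<longrightarrow> ak k $ i = 0) \<and> ak k + jacT g (xk k) (lk k) + grad f (xk k) = 0 \<and> norm (ak k) > real (Suc k)"
    by metis
  define t where "t k = norm (ak k) + norm (lk k)" for k
  have tgt: "t k > real (Suc k)" for k using H[of k] unfolding t_def by (smt (verit) norm_ge_zero)
  then have tpos: "t k > 0" for k by (smt (verit) of_nat_0_le_iff)
  define w where "w k = (inverse (t k) *\<^sub>R ak k, inverse (t k) *\<^sub>R lk k)" for k
  have wn: "norm (fst (w k)) + norm (snd (w k)) = 1" for k
  proof -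
    have "norm (fst (w k)) + norm (snd (w k)) = inverse (t k) * t k"
      unfolding w_def t_def using tpos[of k] by (simp add: algebra_simps)
    then show ?thesis using tpos[of k] by simp
  qed
  have "w k \<in> cball 0 1" for k
    using wn[of k] norm_Pair_le[of "fst (w k)" "snd (w k)"] by simp
  then obtain l r where lr: "strict_mono (r :: nat \<Rightarrow> nat)" "(w \<circ> r) \<longlonglongrightarrow> l"
    using seq_compactE[OF compact_imp_seq_compact[OF compact_cball]] by metis
  obtain a b where l: "l = (a, b)" by (cases l)
  have wa: "(\<lambda>k. fst (w (r k))) \<longlonglongrightarrow> a" using tendsto_fst[OF lr(2)] l by (simp add: o_def)
  have wb: "(\<lambda>k. snd (w (r k))) \<longlonglongrightarrow> b" using tendsto_snd[OF lr(2)] l by (simp add: o_def)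
  have "(\<lambda>k. norm (fst (w (r k))) + norm (snd (w (r k)))) \<longlonglongrightarrow> norm a + norm b"
    using wa wb by (intro tendsto_intros)
  then have ab1: "norm a + norm b = 1" using wn by (simp add: LIMSEQ_const_iff)
  have "(\<lambda>k. xk k - xs) \<longlonglongrightarrow> 0"
    by (rule Lim_null_comparison[OF _ LIMSEQ_inverse_real_of_nat]) (rule always_eventually, metis H less_imp_le)
  then have "(\<lambda>k. (xk k - xs) + xs) \<longlonglongrightarrow> 0 + xs" by (intro tendsto_intros)
  then have "xk \<longlonglongrightarrow> xs" by simp
  then have xr: "(\<lambda>k. xk (r k)) \<longlonglongrightarrow> xs" using LIMSEQ_subseq_LIMSEQ[OF _ lr(1)] by (simp add: o_def)
  have "(\<lambda>k. inverse (t k)) \<longlonglongrightarrow> 0"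
  proof (rule Lim_null_comparison[OF _ LIMSEQ_inverse_real_of_nat], rule always_eventually, rule allI)
    fix k show "norm (inverse (t k)) \<le> inverse (real (Suc k))"
      using tgt[of k] tpos[of k] by (simp add: le_imp_inverse_le)
  qed
  then have tr: "(\<lambda>k. inverse (t (r k))) \<longlonglongrightarrow> 0" using LIMSEQ_subseq_LIMSEQ[OF _ lr(1)] by (simp add: o_def)
  have asup: "\<forall>i. xs $ i \<noteq> 0 \<longrightarrow> a $ i = 0"
  proof (intro allI impI)
    fix i assume xi: "xs $ i \<noteq> 0"
    have "(\<lambda>k. fst (w (r k)) $ i) \<longlonglongrightarrow> a $ i" using wa by (intro tendsto_intros)
    moreover have "fst (w (r k)) $ i = 0" for k using H[of "r k"] xi unfolding w_def by simp
    ultimately show "a $ i = 0" by (simp add: LIMSEQ_const_iff)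
  qed
  have gX: "g xs \<in> X" using gm unfolding SP_GMFCQ_def by blast
  have bN: "b \<in> limiting_normal_cone X (g xs)"
  proof (rule lim_cone_osc[OF _ C1_tendsto[OF g xr] wb gX])
    show "\<forall>k. snd (w (r k)) \<in> limiting_normal_cone X (g (xk (r k)))"
    proof
      fix k show "snd (w (r k)) \<in> limiting_normal_cone X (g (xk (r k)))"
        unfolding w_def snd_conv by (rule lim_cone_scale) (use H tpos in auto)
    qed
  qed
  have eq: "fst (w k) + jacT g (xk k) (snd (w k)) + inverse (t k) *\<^sub>R grad f (xk k) = 0" for k
  proof -
    have "inverse (t k) *\<^sub>R (ak k + jacT g (xk k) (lk k) + grad f (xk k)) = 0" using H[of k] by simp
    then show ?thesis unfolding w_def by (simp add: jacT_scale scaleR_add_right)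
  qed
  have "(\<lambda>k. fst (w (r k)) + jacT g (xk (r k)) (snd (w (r k))) + inverse (t (r k)) *\<^sub>R grad f (xk (r k)))
      \<longlonglongrightarrow> a + jacT g xs b + 0 *\<^sub>R grad f xs"
    by (intro tendsto_intros wa jacT_tendsto[OF g xr wb] tr grad_tendsto[OF f xr])
  then have "a + jacT g xs b = 0" using eq by (simp add: LIMSEQ_const_iff)
  then have "a = 0 \<and> b = 0" using gm asup bN unfolding SP_GMFCQ_def by blast
  then show False using ab1 by simp
qed

theorem mainTheorem4:
  fixes f :: "real^'n \<Rightarrow> real" and g :: "real^'n \<Rightarrow> real^'m"
    and X :: "(real^'m) set" and \<rho> :: real and p :: "'n \<Rightarrow> real \<Rightarrow> real"
    and xs ys :: "real^'n"
  assumes "C1_map f" and "C1_map g"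
    and "X \<noteq> {}" and "closed X"
    and "\<rho> > 0"
    and "\<forall>i. penalty_cond \<rho> (p i)"
    and "SPO_stationary f g X p xs ys"
    and "SP_GMFCQ g X xs"
  shows "\<exists>\<alpha>s>0. \<exists>U. open U \<and> (xs, ys) \<in> U \<and>
           (\<forall>\<alpha>\<ge>\<alpha>s. \<forall>x y. (x, y) \<in> U \<and> Pen_stationary f g X p \<alpha> x y \<longrightarrow> SPO_stationary f g X p x y)"
proof -
  note f = assms(1) and g = assms(2) and pc = assms(6) and gm = assms(8)
  define dd where "dd i = deriv (p i) 0" for i
  have ddneg: "dd i < 0" for i unfolding dd_def using pen_deriv(1)[OF pc[rule_format] assms(5)] .
  have ddmono: "t \<ge> 0 \<Longrightarrow> deriv (p i) t \<ge> dd i" for i t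
    unfolding dd_def using pen_deriv(2)[OF pc[rule_format] assms(5)] by blast
  obtain lam0 gx gy nu where comp0: "\<forall>i. xs $ i * ys $ i = 0" and ynn0: "\<forall>i. ys $ i \<ge> 0"
    and nu0: "\<forall>i. ys $ i = 0 \<longrightarrow> nu i \<ge> 0"
    and E2s: "0 = grad_psum p ys + (\<chi> i. if ys $ i = 0 then gy i * xs $ i - nu i else 0)"
    using assms(7) unfolding SPO_stationary_def by (elim conjE exE) (rule that, assumption+)
  have ysp: "ys $ i > 0" if xi: "xs $ i = 0" for i
  proof (rule ccontr)
    assume "\<not> ys $ i > 0"
    then have y0: "ys $ i = 0" using ynn0[rule_format, of i] by linarith
    have "(grad_psum p ys + (\<chi> i. if ys $ i = 0 then gy i * xs $ i - nu i else 0)) $ i = 0"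
      using E2s by simp
    then have "dd i = nu i" using y0 xi unfolding grad_psum_def dd_def by simp
    then show False using nu0[rule_format, OF y0] ddneg[of i] by simp
  qed
  obtain \<delta> M where dpos: "\<delta> > 0" and bnd: "\<forall>x lam la. norm (x - xs) < \<delta> \<and> lam \<in> limiting_normal_cone X (g x)
     \<and> (\<forall>i. xs $ i \<noteq> 0 \<longrightarrow> la $ i = 0) \<and> la + jacT g x lam + grad f x = 0 \<longrightarrow> norm la \<le> M"
    using bound_lemma[OF f g gm] by (elim exE conjE) (rule that)
  define c where "c i = (if xs $ i \<noteq> 0 then \<bar>xs $ i\<bar> else ys $ i)" for i
  have cpos: "c i > 0" for i unfolding c_def using ysp by auto
  define cm where "cm = Min (range c)"
  have cm_pos: "cm > 0" unfolding cm_def using cpos by (simp add: Min_gr_iff)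
  have cm_le: "cm \<le> c i" for i unfolding cm_def by simp
  define r where "r = min \<delta> (cm / 2)"
  have rpos: "r > 0" unfolding r_def using dpos cm_pos by simp
  define T where "T i = (if xs $ i \<noteq> 0 then -2 * dd i / \<bar>xs $ i\<bar> else 2 * \<bar>M\<bar> / ys $ i)" for i
  have Tnn: "T i \<ge> 0" for i unfolding T_def using ddneg[of i] ysp[of i] by auto
  define as where "as = 1 + (\<Sum>i\<in>UNIV. T i)"
  have Tle: "T i < as" for i
  proof -
    have "T i \<le> (\<Sum>i\<in>UNIV. T i)" by (rule member_le_sum) (use Tnn in auto)
    then show ?thesis unfolding as_def by simp
  qed
  have aspos: "as > 0" using Tle[of undefined] Tnn[of undefined] by simp
  show ?thesis
  proof (intro exI[of _ as] conjI exI[of _ "ball (xs, ys) r"] allI impI)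
    show "as > 0" by (rule aspos)
    show "open (ball (xs, ys) r)" by simp
    show "(xs, ys) \<in> ball (xs, ys) r" using rpos by simp
    fix \<alpha> x y assume al: "\<alpha> \<ge> as" and H: "(x, y) \<in> ball (xs, ys) r \<and> Pen_stationary f g X p \<alpha> x y"
    have apos: "\<alpha> > 0" using al aspos by simp
    have "dist (x, y) (xs, ys) < r" using H by (simp add: dist_commute)
    then have nd: "norm (x - xs, y - ys) < r" by (simp add: dist_norm)
    have nx: "norm (x - xs) < r" using nd norm_fst_le[where x="x - xs" and y="y - ys"] by simp
    have ny: "norm (y - ys) < r" using nd norm_snd_le[where x="x - xs" and y="y - ys"] by simp
    have cx: "\<bar>x $ i - xs $ i\<bar> < r" for i using nx component_le_norm_cart[of "x - xs" i] by simp
    have cy: "\<bar>y $ i - ys $ i\<bar> < r" for i using ny component_le_norm_cart[of "y - ys" i] by simp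
    obtain lam gam sv where gxX: "g x \<in> X" and ynn: "\<forall>i. y $ i \<ge> 0"
      and lamN: "lam \<in> limiting_normal_cone X (g x)" and gam: "\<forall>i. y $ i = 0 \<longrightarrow> gam i \<ge> 0"
      and s1: "\<forall>i. x $ i \<noteq> 0 \<longrightarrow> sv $ i = sgn (x $ i)" and s2: "\<forall>i. x $ i = 0 \<longrightarrow> \<bar>sv $ i\<bar> \<le> 1"
      and E1: "0 = grad f x + \<alpha> *\<^sub>R (\<chi> i. y $ i * sv $ i) + jacT g x lam"
      and E2: "0 = grad_psum p y + \<alpha> *\<^sub>R (\<chi> i. \<bar>x $ i\<bar>) - (\<chi> i. if y $ i = 0 then gam i else 0)"
      using H unfolding Pen_stationary_def by (elim conjE exE) (rule that, assumption+)
    have E2i: "deriv (p i) (y $ i) + \<alpha> * \<bar>x $ i\<bar> - (if y $ i = 0 then gam i else 0) = 0" for i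
    proof -
      have "(grad_psum p y + \<alpha> *\<^sub>R (\<chi> i. \<bar>x $ i\<bar>) - (\<chi> i. if y $ i = 0 then gam i else 0)) $ i = 0"
        using E2 by simp
      then show ?thesis unfolding grad_psum_def by simp
    qed
    have E1i: "grad f x $ i + \<alpha> * (y $ i * sv $ i) + jacT g x lam $ i = 0" for i
    proof -
      have "(grad f x + \<alpha> *\<^sub>R (\<chi> i. y $ i * sv $ i) + jacT g x lam) $ i = 0"
        using E1 by simp
      then show ?thesis by simp
    qed
    have clA: "y $ i = 0" if xi: "xs $ i \<noteq> 0" for i
    proof (rule ccontr)
      assume "y $ i \<noteq> 0"
      then have yp: "y $ i > 0" using ynn[rule_format, of i] by linarith
      have "deriv (p i) (y $ i) = - \<alpha> * \<bar>x $ i\<bar>" using E2i[of i] yp by simp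
      then have h1: "\<alpha> * \<bar>x $ i\<bar> \<le> - dd i" using ddmono[of "y $ i" i] yp by simp
      have "r \<le> \<bar>xs $ i\<bar> / 2" using cm_le[of i] xi unfolding r_def c_def by simp
      then have h2: "\<bar>x $ i\<bar> \<ge> \<bar>xs $ i\<bar> / 2" using cx[of i] by simp
      have "\<alpha> * (\<bar>xs $ i\<bar> / 2) \<le> \<alpha> * \<bar>x $ i\<bar>" by (rule mult_left_mono[OF h2]) (use apos in simp)
      then have "\<alpha> * \<bar>xs $ i\<bar> \<le> -2 * dd i" using h1 by simp
      then have "\<alpha> \<le> -2 * dd i / \<bar>xs $ i\<bar>" by (subst pos_le_divide_eq) (use xi in auto)
      then have "\<alpha> \<le> T i" unfolding T_def using xi by simp
      then show False using Tle[of i] al by simp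
    qed
    define la where "la = \<alpha> *\<^sub>R (\<chi> i. y $ i * sv $ i)"
    have lasup: "\<forall>i. xs $ i \<noteq> 0 \<longrightarrow> la $ i = 0" unfolding la_def using clA by simp
    have laeq: "la + jacT g x lam + grad f x = 0" unfolding la_def
      using E1i by (simp add: vec_eq_iff algebra_simps)
    have "norm (x - xs) < \<delta>" using nx unfolding r_def by simp
    then have lab: "norm la \<le> M" using bnd lamN lasup laeq by blast
    have clB: "x $ i = 0" if xi: "xs $ i = 0" for i
    proof (rule ccontr)
      assume xn: "x $ i \<noteq> 0"
      have "r \<le> ys $ i / 2" using cm_le[of i] xi unfolding r_def c_def by simp
      then have yb: "y $ i \<ge> ys $ i / 2" using cy[of i] by simp
      have "\<bar>sv $ i\<bar> = 1" using s1 xn by (simp add: abs_sgn)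
      then have "\<bar>la $ i\<bar> = \<alpha> * y $ i" unfolding la_def using apos ynn
        by (simp add: abs_mult)
      moreover have "\<bar>la $ i\<bar> \<le> \<bar>M\<bar>" using lab component_le_norm_cart[of la i] by simp
      ultimately have h1: "\<alpha> * y $ i \<le> \<bar>M\<bar>" by simp
      have "\<alpha> * (ys $ i / 2) \<le> \<alpha> * y $ i" by (rule mult_left_mono[OF yb]) (use apos in simp)
      then have "\<alpha> * ys $ i \<le> 2 * \<bar>M\<bar>" using h1 by simp
      then have "\<alpha> \<le> 2 * \<bar>M\<bar> / ys $ i" by (subst pos_le_divide_eq) (use ysp[OF xi] in auto)
      then have "\<alpha> \<le> T i" unfolding T_def using xi by simp
      then show False using Tle[of i] al by simp
    qed
    have comp: "x $ i * y $ i = 0" for i using clA clB by (cases "xs $ i = 0") auto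
    have eq1: "0 = grad f x + jacT g x lam + (\<chi> i. if x $ i = 0 then \<alpha> * sv $ i * y $ i else 0)"
    proof (subst vec_eq_iff, rule allI)
      fix i
      have "y $ i * sv $ i = (if x $ i = 0 then sv $ i * y $ i else 0)"
        using comp[of i] by auto
      then show "0 $ i = (grad f x + jacT g x lam + (\<chi> i. if x $ i = 0 then \<alpha> * sv $ i * y $ i else 0)) $ i"
        using E1i[of i] by (auto simp: algebra_simps split: if_splits)
    qed
    have eq2: "0 = grad_psum p y + (\<chi> i. if y $ i = 0 then \<alpha> * sgn (x $ i) * x $ i - gam i else 0)"
    proof (subst vec_eq_iff, rule allI)
      fix i
      show "0 $ i = (grad_psum p y + (\<chi> i. if y $ i = 0 then \<alpha> * sgn (x $ i) * x $ i - gam i else 0)) $ i"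
      proof (cases "y $ i = 0")
        case True
        have sa: "sgn (x $ i) * x $ i = \<bar>x $ i\<bar>" by (simp add: sgn_if)
        show ?thesis using E2i[of i] True sa unfolding grad_psum_def by (simp add: mult.assoc)
      next
        case False
        then have "x $ i = 0" using comp[of i] by simp
        then show ?thesis using E2i[of i] False unfolding grad_psum_def by simp
      qed
    qed
    have ex: "\<exists>lam gx gy nu. lam \<in> limiting_normal_cone X (g x) \<and>
        (\<forall>i. y $ i = 0 \<longrightarrow> nu i \<ge> 0) \<and>
        0 = grad f x + jacT g x lam + (\<chi> i. if x $ i = 0 then gx i * y $ i else 0) \<and>
        0 = grad_psum p y + (\<chi> i. if y $ i = 0 then gy i * x $ i - nu i else 0)"
      by (rule exI[of _ lam], rule exI[of _ "\<lambda>i. \<alpha> * sv $ i"], rule exI[of _ "\<lambda>i. \<alpha> * sgn (x $ i)"],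
          rule exI[of _ gam], intro conjI lamN gam eq1 eq2)
    show "SPO_stationary f g X p x y"
      unfolding SPO_stationary_def using gxX comp ynn ex by blast
  qed
qed

end
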